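(* Let $G=(V,E)$ be a simple undirected graph with $n=|V|$ vertices and $m=|E|$ edges, let $b$ be a real number, and let $$\mathcal{P}_1=\Big\{(x,y)\in\mathbb{R}^m_{+}\times[0,1]^n:\ 1-y_u-y_v\le x_{uv}\ \text{for all } \{u,v\}\in E,\ \ \textstyle\sum_{v\in V}y_v\le b\Big\}.$$ Then: (1) for every edge $\{u,v\}\in E$, the inequality $x_{uv}\ge 0$ is facet-defining for $\mathcal{P}_1$ if $b\ge 2$; (2) for every vertex $v\in V$, the inequality $y_v\ge 0$ is facet-defining for $\mathcal{P}_1$ if $b\ge 1$; (3) for every vertex $v\in V$, the inequality $y_v\le 1$ is facet-defining for $\mathcal{P}_1$ if $b\ge 2$.
   Context: $x$ is indexed by edges and $y$ by vertices of $G$; $\mathcal{P}_1$ is the linear relaxation of the MIP formulation of the 1-hop distance-based critical node detection problem. An inequality is facet-defining if it is valid for $\mathcal{P}_1$ and the face it induces has dimension $\dim\mathcal{P}_1-1$. *)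

theory Defs
  imports "HOL-Analysis.Analysis"
begin

definition simple_graph :: "('e::finite \<Rightarrow> 'v::finite set) \<Rightarrow> bool" where
  "simple_graph ends \<longleftrightarrow> inj ends \<and> (\<forall>e. card (ends e) = 2)"

definition P1 :: "('e::finite \<Rightarrow> 'v::finite set) \<Rightarrow> real \<Rightarrow> ((real^'e) \<times> (real^'v)) set" where
  "P1 ends b = {z. let x = fst z; y = snd z in
      (\<forall>e. 0 \<le> x $ e) \<and> (\<forall>v. 0 \<le> y $ v \<and> y $ v \<le> 1) \<and>
      (\<forall>e u v. ends e = {u, v} \<longrightarrow> 1 - y $ u - y $ v \<le> x $ e) \<and>
      (\<Sum>v\<in>UNIV. y $ v) \<le> b}"

definition facet_defining :: "'a::euclidean_space set \<Rightarrow> 'a \<Rightarrow> real \<Rightarrow> bool" where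
  "facet_defining P c d \<longleftrightarrow>
     (\<forall>z\<in>P. c \<bullet> z \<le> d) \<and> aff_dim (P \<inter> {z. c \<bullet> z = d}) = aff_dim P - 1"

end

theory Submission
  imports Defs
begin

lemma facet_lemma:
  fixes P T :: "'a::euclidean_space set"
  assumes c: "c \<noteq> 0" and valid: "\<forall>z\<in>P. c \<bullet> z \<le> d"
    and T: "open T" and z0: "z0 \<in> T" "c \<bullet> z0 = d"
    and sub: "T \<inter> {z. c \<bullet> z \<le> d} \<subseteq> P"
  shows "facet_defining P c d"
proof -
  obtain r where r: "r > 0" "ball z0 r \<subseteq> T" using T z0 open_contains_ball by blast
  define z1 where "z1 = z0 - (r / 2 / norm c) *\<^sub>R c"
  have "dist z0 z1 = r/2" using c r by (simp add: z1_def dist_norm)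
  hence z1T: "z1 \<in> T" using r by auto
  have "c \<bullet> z1 = d - r/2 * norm c" using z0 c by (simp add: z1_def inner_diff_right dot_square_norm power2_eq_square)
  hence z1l: "c \<bullet> z1 < d" using r c by simp
  define U where "U = T \<inter> {z. c \<bullet> z < d}"
  have Uo: "open U" unfolding U_def using T by (intro open_Int open_Collect_less continuous_intros) auto
  have "U \<subseteq> P" using sub by (auto simp: U_def)
  moreover have "U \<noteq> {}" using z1T z1l by (auto simp: U_def)
  ultimately have "aff_dim P = DIM('a)" using Uo
    by (metis aff_dim_le_DIM aff_dim_open aff_dim_subset order_antisym)
  moreover
  let ?H = "{z. c \<bullet> z = d}"
  have "convex ?H" by (simp add: convex_hyperplane)
  hence "aff_dim (?H \<inter> T) = DIM('a) - 1" using T z0 c by (subst aff_dim_convex_Int_open) auto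
  moreover have "?H \<inter> T \<subseteq> P \<inter> ?H" using sub by auto
  moreover have "P \<inter> ?H \<subseteq> ?H" by auto
  ultimately have "aff_dim (P \<inter> ?H) = aff_dim P - 1"
  proof -
    assume a1: "aff_dim P = DIM('a)" and a2: "aff_dim (?H \<inter> T) = DIM('a) - 1"
      and a3: "?H \<inter> T \<subseteq> P \<inter> ?H" and a4: "P \<inter> ?H \<subseteq> ?H"
    have "aff_dim (?H \<inter> T) \<le> aff_dim (P \<inter> ?H)" using a3 by (rule aff_dim_subset)
    moreover have "aff_dim (P \<inter> ?H) \<le> aff_dim ?H" using a4 by (rule aff_dim_subset)
    moreover have "aff_dim ?H = int (DIM('a) - 1)" using c by simp
    moreover have "DIM('a) \<ge> 1" by (simp add: DIM_positive Suc_leI)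
    ultimately show ?thesis using a1 a2 by linarith
  qed
  thus ?thesis using valid unfolding facet_defining_def by auto
qed

lemma opn_fst: "open {z::(real^'e) \<times> (real^'v). a < fst z $ i}"
  by (intro open_Collect_less continuous_intros)
lemma opn_snd1: "open {z::(real^'e) \<times> (real^'v). a < snd z $ i}"
  by (intro open_Collect_less continuous_intros)
lemma opn_snd2: "open {z::(real^'e) \<times> (real^'v). snd z $ i < a}"
  by (intro open_Collect_less continuous_intros)
lemma opn_sum: "open {z::(real^'e) \<times> (real^'v). (\<Sum>w\<in>UNIV. snd z $ w) < a}"
  by (intro open_Collect_less continuous_intros)
lemma opn_sum2: "open {z::(real^'e) \<times> (real^'v). a < snd z $ u + snd z $ v}"
  by (intro open_Collect_less continuous_intros)

lemma sum_bound:
  fixes S :: "'v::finite set"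
  assumes "\<And>w. f w \<le> (if w \<in> S then a else 0) + 1 / (10 * real CARD('v))"
  shows "sum f UNIV \<le> a * card S + 1/10"
proof -
  have "sum f UNIV \<le> (\<Sum>w\<in>UNIV. (if w \<in> S then a else 0) + 1 / (10 * real CARD('v)))"
    by (rule sum_mono) (rule assms)
  also have "\<dots> = a * card S + 1/10"
    by (simp add: sum.distrib sum.If_cases Int_absorb1 mult.commute)
  finally show ?thesis .
qed


lemma inn1: "((- axis e 1, 0) :: (real^'e) \<times> (real^'v)) \<bullet> z = - (fst z $ e)"
  by (cases z) (simp add: inner_axis')
lemma inn2: "((0, - axis v 1) :: (real^'e) \<times> (real^'v)) \<bullet> z = - (snd z $ v)"
  by (cases z) (simp add: inner_axis')
lemma inn3: "((0, axis v 1) :: (real^'e) \<times> (real^'v)) \<bullet> z = snd z $ v"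
  by (cases z) (simp add: inner_axis')

lemma case2:
  fixes ends :: "'e::finite \<Rightarrow> 'v::finite set" and b :: real
  assumes b: "b \<ge> 1"
  shows "facet_defining (P1 ends b) (0, - axis v 1) 0"
proof -
  define \<epsilon> :: real where "\<epsilon> = 1 / (10 * real CARD('v))"
  have "0 < CARD('v)" by (simp add: card_gt_0_iff)
  hence "1 \<le> real CARD('v)" by linarith
  hence c10: "1 < real CARD('v) * 10" by linarith
  hence ep: "0 < \<epsilon>" "\<epsilon> < 1" unfolding \<epsilon>_def by (auto simp: field_simps)
  define T :: "((real^'e) \<times> (real^'v)) set" where "T = (\<Inter>e. {z. 1 < fst z $ e}) \<inter> (\<Inter>w\<in>-{v}. {z. 0 < snd z $ w})
     \<inter> (\<Inter>w. {z. snd z $ w < 1}) \<inter> {z. (\<Sum>w\<in>UNIV. snd z $ w) < b}"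
  define z0 :: "(real^'e) \<times> (real^'v)" where "z0 = (\<chi> e. 2, \<chi> w. if w = v then 0 else \<epsilon>)"
  show ?thesis
  proof (rule facet_lemma[where T=T and ?z0.0=z0])
    show "(0::real^'e, - axis v (1::real)) \<noteq> 0" by (simp add: zero_prod_def axis_eq_0_iff)
    show "\<forall>z\<in>P1 ends b. (0, - axis v 1) \<bullet> z \<le> 0" by (auto simp: inn2 P1_def Let_def)
    show "open T" unfolding T_def by (intro open_Int open_INT opn_fst opn_snd1 opn_snd2 opn_sum ballI finite) 
    have "(\<Sum>w\<in>UNIV. snd z0 $ w) \<le> (0::real) * card ({}::'v set) + 1/10"
      by (rule sum_bound) (auto simp: z0_def \<epsilon>_def)
    then show "z0 \<in> T" using ep b by (auto simp: T_def z0_def)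
    show "(0, - axis v 1) \<bullet> z0 = 0" by (simp add: inn2 z0_def inner_axis')
    show "T \<inter> {z. (0, - axis v 1) \<bullet> z \<le> 0} \<subseteq> P1 ends b"
    proof
      fix z assume z: "z \<in> T \<inter> {z. (0, - axis v 1) \<bullet> z \<le> 0}"
      have y0: "\<forall>w. 0 \<le> snd z $ w" using z by (auto simp: T_def inn2) (metis less_le ComplI singletonD)
      have y1: "\<forall>w. snd z $ w \<le> 1" using z by (auto simp: T_def less_imp_le)
      have x1: "\<forall>e. 1 < fst z $ e" using z by (auto simp: T_def)
      have s: "(\<Sum>w\<in>UNIV. snd z $ w) \<le> b" using z by (auto simp: T_def)
      have ed: "\<forall>e u w. 1 - snd z $ u - snd z $ w \<le> fst z $ e"
      proof (intro allI)
        fix e u w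
        have "0 \<le> snd z $ u" "0 \<le> snd z $ w" "1 < fst z $ e" using y0 x1 by auto
        thus "1 - snd z $ u - snd z $ w \<le> fst z $ e" by linarith
      qed
      have x0: "\<forall>e. 0 \<le> fst z $ e" using x1 by (metis less_trans zero_less_one less_imp_le)
      show "z \<in> P1 ends b" unfolding P1_def Let_def
        using y0 y1 x0 s ed by auto
    qed
  qed
qed


lemma case3:
  fixes ends :: "'e::finite \<Rightarrow> 'v::finite set" and b :: real
  assumes b: "b \<ge> 2"
  shows "facet_defining (P1 ends b) (0, axis v 1) 1"
proof -
  define \<epsilon> :: real where "\<epsilon> = 1 / (10 * real CARD('v))"
  have "0 < CARD('v)" by (simp add: card_gt_0_iff)
  hence "1 \<le> real CARD('v)" by linarith
  hence c10: "1 < real CARD('v) * 10" by linarith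
  hence ep: "0 < \<epsilon>" "\<epsilon> < 1" unfolding \<epsilon>_def by (auto simp: field_simps)
  define T :: "((real^'e) \<times> (real^'v)) set" where "T = (\<Inter>e. {z. 1 < fst z $ e}) \<inter> (\<Inter>w. {z. 0 < snd z $ w})
     \<inter> (\<Inter>w\<in>-{v}. {z. snd z $ w < 1}) \<inter> {z. (\<Sum>w\<in>UNIV. snd z $ w) < b}"
  define z0 :: "(real^'e) \<times> (real^'v)" where "z0 = (\<chi> e. 2, \<chi> w. if w = v then 1 else \<epsilon>)"
  show ?thesis
  proof (rule facet_lemma[where T=T and ?z0.0=z0])
    show "(0::real^'e, axis v (1::real)) \<noteq> 0" by (simp add: zero_prod_def axis_eq_0_iff)
    show "\<forall>z\<in>P1 ends b. (0, axis v 1) \<bullet> z \<le> 1" by (auto simp: inn3 P1_def Let_def)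
    show "open T" unfolding T_def by (intro open_Int open_INT opn_fst opn_snd1 opn_snd2 opn_sum ballI finite) 
    have "(\<Sum>w\<in>UNIV. snd z0 $ w) \<le> (1::real) * card {v} + 1/10"
      by (rule sum_bound) (auto simp: z0_def \<epsilon>_def)
    then show "z0 \<in> T" using ep b by (auto simp: T_def z0_def)
    show "(0, axis v 1) \<bullet> z0 = 1" by (simp add: inn3 z0_def inner_axis')
    show "T \<inter> {z. (0, axis v 1) \<bullet> z \<le> 1} \<subseteq> P1 ends b"
    proof
      fix z assume z: "z \<in> T \<inter> {z. (0, axis v 1) \<bullet> z \<le> 1}"
      have y0: "\<forall>w. 0 \<le> snd z $ w" using z by (auto simp: T_def less_imp_le)
      have y1: "\<forall>w. snd z $ w \<le> 1" using z by (auto simp: T_def inn3) (metis less_le ComplI singletonD)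
      have x1: "\<forall>e. 1 < fst z $ e" using z by (auto simp: T_def)
      have s: "(\<Sum>w\<in>UNIV. snd z $ w) \<le> b" using z by (auto simp: T_def)
      have ed: "\<forall>e u w. 1 - snd z $ u - snd z $ w \<le> fst z $ e"
      proof (intro allI)
        fix e u w
        have "0 \<le> snd z $ u" "0 \<le> snd z $ w" "1 < fst z $ e" using y0 x1 by auto
        thus "1 - snd z $ u - snd z $ w \<le> fst z $ e" by linarith
      qed
      have x0: "\<forall>e. 0 \<le> fst z $ e" using x1 by (metis less_trans zero_less_one less_imp_le)
      show "z \<in> P1 ends b" unfolding P1_def Let_def
        using y0 y1 x0 s ed by auto
    qed
  qed
qed

lemma case1:
  fixes ends :: "'e::finite \<Rightarrow> 'v::finite set" and b :: real
  assumes b: "b \<ge> 2" and g: "simple_graph ends"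
  shows "facet_defining (P1 ends b) (- axis e 1, 0) 0"
proof -
  obtain u w where uw: "ends e = {u, w}" "u \<noteq> w" using g unfolding simple_graph_def card_2_iff by blast
  define \<epsilon> :: real where "\<epsilon> = 1 / (10 * real CARD('v))"
  have "0 < CARD('v)" by (simp add: card_gt_0_iff)
  hence "1 \<le> real CARD('v)" by linarith
  hence c10: "1 < real CARD('v) * 10" by linarith
  hence ep: "0 < \<epsilon>" "\<epsilon> < 1" unfolding \<epsilon>_def by (auto simp: field_simps)
  define T :: "((real^'e) \<times> (real^'v)) set" where "T = (\<Inter>e'\<in>-{e}. {z. 1 < fst z $ e'}) \<inter> (\<Inter>w. {z. 0 < snd z $ w})
     \<inter> (\<Inter>w. {z. snd z $ w < 1}) \<inter> {z. 1 < snd z $ u + snd z $ w} \<inter> {z. (\<Sum>w\<in>UNIV. snd z $ w) < b}"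
  define z0 :: "(real^'e) \<times> (real^'v)" where "z0 = (\<chi> e'. if e' = e then 0 else 2, \<chi> x. if x \<in> {u, w} then 3/5 else \<epsilon>)"
  show ?thesis
  proof (rule facet_lemma[where T=T and ?z0.0=z0])
    show "(- axis e (1::real), 0::real^'v) \<noteq> 0" by (simp add: zero_prod_def axis_eq_0_iff)
    show "\<forall>z\<in>P1 ends b. (- axis e 1, 0) \<bullet> z \<le> 0" by (auto simp: inn1 P1_def Let_def)
    show "open T" unfolding T_def by (intro open_Int open_INT opn_fst opn_snd1 opn_snd2 opn_sum opn_sum2 ballI finite) 
    have "(\<Sum>x\<in>UNIV. snd z0 $ x) \<le> (3/5::real) * card {u, w} + 1/10"
      by (rule sum_bound) (auto simp: z0_def \<epsilon>_def)
    then show "z0 \<in> T" using ep b uw by (auto simp: T_def z0_def)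
    show "(- axis e 1, 0) \<bullet> z0 = 0" by (simp add: inn1 z0_def inner_axis')
    show "T \<inter> {z. (- axis e 1, 0) \<bullet> z \<le> 0} \<subseteq> P1 ends b"
    proof
      fix z assume z: "z \<in> T \<inter> {z. (- axis e 1, 0) \<bullet> z \<le> 0}"
      have y0: "\<forall>x. 0 \<le> snd z $ x" using z by (auto simp: T_def less_imp_le)
      have y1: "\<forall>x. snd z $ x \<le> 1" using z by (auto simp: T_def less_imp_le)
      have x1: "\<forall>e'. e' \<noteq> e \<longrightarrow> 1 < fst z $ e'" using z by (auto simp: T_def)
      have xe: "0 \<le> fst z $ e" using z by (auto simp: inn1 inner_axis')
      have uw1: "1 < snd z $ u + snd z $ w" using z by (auto simp: T_def)
      have s: "(\<Sum>w\<in>UNIV. snd z $ w) \<le> b" using z by (auto simp: T_def)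
      have ed: "\<forall>e' a c. ends e' = {a, c} \<longrightarrow> 1 - snd z $ a - snd z $ c \<le> fst z $ e'"
      proof (intro allI impI)
        fix e' a c assume ac: "ends e' = {a, c}"
        show "1 - snd z $ a - snd z $ c \<le> fst z $ e'"
        proof (cases "e' = e")
          case True
          hence "{a, c} = {u, w}" using ac uw by simp
          hence "(a = u \<and> c = w) \<or> (a = w \<and> c = u)" using uw(2) by (auto simp: doubleton_eq_iff)
          thus ?thesis using True uw1 xe by auto
        next
          case False
          have "0 \<le> snd z $ a" "0 \<le> snd z $ c" "1 < fst z $ e'" using y0 x1 False by auto
          thus ?thesis by linarith
        qed
      qed
      have x0: "\<forall>e'. 0 \<le> fst z $ e'" using x1 xe by (metis less_trans zero_less_one less_imp_le)
      show "z \<in> P1 ends b" unfolding P1_def Let_def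
        using y0 y1 x0 s ed by auto
    qed
  qed
qed

theorem proposition2:
  fixes ends :: "'e::finite \<Rightarrow> 'v::finite set" and b :: real
  assumes "simple_graph ends"
  shows "(b \<ge> 2 \<longrightarrow> (\<forall>e. facet_defining (P1 ends b) (- axis e 1, 0) 0))
       \<and> (b \<ge> 1 \<longrightarrow> (\<forall>v. facet_defining (P1 ends b) (0, - axis v 1) 0))
       \<and> (b \<ge> 2 \<longrightarrow> (\<forall>v. facet_defining (P1 ends b) (0, axis v 1) 1))"
  using case1[OF _ assms] case2 case3 by blast

end
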